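(* Let $a\le n$, $k\in\mathbb Z$, and $u,w\in S_{[a,n]}$ with $u\xrightarrow{k}w$. If $i\in u((k,n])$ and $i\notin\mathrm{fix}_{(k,n]}(u,w)$, then there exists $t\in[a,k]$ with $w(t)\ge i$.
   Context: $S_{[a,n]}$ is the set of bijections of $\mathbb Z$ fixing every integer outside $[a,n]$; $\tau_{i,j}$ is the transposition of $i<j$, $u\tau_{i,j}=u\circ\tau_{i,j}$, $\ell(u)$ is the number of inversions. $u\lessdot_k u\tau_{i,j}$ if $i\le k<j$ and $\ell(u\tau_{i,j})=\ell(u)+1$. $u\xrightarrow{k}w$ means there is a chain $u=v_1\lessdot_k\cdots\lessdot_k v_s=w$ ($s\ge1$), $v_{t+1}=v_t\tau_{i_t,j_t}$, with $v_1(i_1)<\cdots<v_{s-1}(i_{s-1})$. For $I\subseteq\mathbb Z$, $\mathrm{fix}_I(u,w)=\{u(t):t\in I,\ u(t)=w(t)\}$. *)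

theory Defs
  imports "HOL-Combinatorics.Transposition"
begin

definition S_int :: "int \<Rightarrow> int \<Rightarrow> (int \<Rightarrow> int) set" where
  "S_int a n = {u. bij u \<and> (\<forall>t. t \<notin> {a..n} \<longrightarrow> u t = t)}"

definition inv_len :: "(int \<Rightarrow> int) \<Rightarrow> nat" where
  "inv_len u = card {(i, j). i < j \<and> u j < u i}"

definition kcover :: "int \<Rightarrow> int \<Rightarrow> int \<Rightarrow> (int \<Rightarrow> int) \<Rightarrow> (int \<Rightarrow> int) \<Rightarrow> bool" where
  "kcover k i j u v \<longleftrightarrow> i \<le> k \<and> k < j \<and> v = u \<circ> transpose i j \<and> inv_len v = inv_len u + 1"

definition kchain :: "int \<Rightarrow> (int \<Rightarrow> int) \<Rightarrow> (int \<Rightarrow> int) \<Rightarrow> bool" where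
  "kchain k u w \<longleftrightarrow> (\<exists>(s::nat) (v::nat \<Rightarrow> int \<Rightarrow> int) (ii::nat \<Rightarrow> int) (jj::nat \<Rightarrow> int).
      s \<ge> 1 \<and> v 0 = u \<and> v (s - 1) = w \<and>
      (\<forall>t. t + 1 < s \<longrightarrow> kcover k (ii t) (jj t) (v t) (v (t + 1))) \<and>
      (\<forall>t. t + 2 < s \<longrightarrow> v t (ii t) < v (t + 1) (ii (t + 1))))"

definition fixI :: "int set \<Rightarrow> (int \<Rightarrow> int) \<Rightarrow> (int \<Rightarrow> int) \<Rightarrow> int set" where
  "fixI I u w = {u t | t. t \<in> I \<and> u t = w t}"

end

theory Submission
  imports Defs
begin

lemma swap_not_cover:
  fixes u :: "int \<Rightarrow> int"
  assumes ij: "i < j" and le: "u j \<le> u i"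
  shows "inv_len (u \<circ> transpose i j) \<noteq> inv_len u + 1"
proof
  define Iu where "Iu = {(x,y). x < y \<and> u y < u x}"
  define Iv where "Iv = {(x,y). x < y \<and> (u \<circ> transpose i j) y < (u \<circ> transpose i j) x}"
  define F where "F = {(i,j)} \<union> {(i,m)|m. i<m \<and> m<j} \<union> {(m,j)|m. i<m \<and> m<j}"
  define f where "f = (\<lambda>(x,y). if (x,y) \<in> F then (x,y) else (transpose i j x, transpose i j y))"
  assume eq: "inv_len (u \<circ> transpose i j) = inv_len u + 1"
  hence ceq: "card Iv = card Iu + 1" by (simp add: inv_len_def Iu_def Iv_def)
  have finF: "finite F"
  proof -
    have "F \<subseteq> {i..j} \<times> {i..j}" using ij by (auto simp: F_def)
    thus ?thesis by (rule finite_subset) simp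
  qed
  have finIv: "finite Iv" using ceq card.infinite by fastforce
  have "Iu \<subseteq> F \<union> f ` Iv"
  proof
    fix p assume p: "p \<in> Iu"
    obtain x y where xy: "p = (x,y)" by (cases p)
    show "p \<in> F \<union> f ` Iv"
    proof (cases "p \<in> F")
      case False
      have q: "(transpose i j x, transpose i j y) \<in> Iv - F"
        using p False ij unfolding xy Iu_def Iv_def F_def
        by (auto simp: transpose_def split: if_splits)
      have "f (transpose i j x, transpose i j y) = p"
        using q unfolding f_def xy by (simp add: transpose_def)
      thus ?thesis using q by blast
    qed simp
  qed
  hence finIu: "finite Iu" using finF finIv by (meson finite_UnI finite_imageI finite_subset)
  have "inj_on f Iv"
  proof (rule inj_onI)
    fix p q assume p: "p \<in> Iv" and q: "q \<in> Iv" and e: "f p = f q"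
    obtain x y where xy: "p = (x,y)" by (cases p)
    obtain x' y' where xy': "q = (x',y')" by (cases q)
    show "p = q"
      using p q e ij unfolding xy xy' f_def Iv_def F_def
      by (auto simp: transpose_def split: if_splits)
  qed
  moreover have "f ` Iv \<subseteq> Iu"
  proof
    fix r assume "r \<in> f ` Iv"
    then obtain p where p: "p \<in> Iv" and r: "r = f p" by blast
    obtain x y where xy: "p = (x,y)" by (cases p)
    show "r \<in> Iu"
      using p ij le unfolding r xy f_def Iv_def F_def Iu_def
      by (auto simp: transpose_def split: if_splits)
  qed
  ultimately have "card Iv \<le> card Iu" using finIu by (metis card_inj_on_le)
  thus False using ceq by simp
qed

theorem lemma2p25:
  fixes a n k i :: int and u w :: "int \<Rightarrow> int"
  assumes "a \<le> n" and "u \<in> S_int a n" and "w \<in> S_int a n"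
    and "kchain k u w"
    and "i \<in> u ` {k<..n}" and "i \<notin> fixI {k<..n} u w"
  shows "\<exists>t\<in>{a..k}. i \<le> w t"
proof -
  obtain s v ii jj where s1: "(s::nat) \<ge> 1" and v0: "v 0 = u" and vs: "v (s - 1) = w"
    and cov: "\<And>t. t + 1 < s \<Longrightarrow> kcover k (ii t) (jj t) (v t) (v (t + 1))"
    using assms(4) unfolding kchain_def by blast
  have stepF: "ii t \<le> k \<and> k < jj t \<and> v (t+1) = v t \<circ> transpose (ii t) (jj t)
      \<and> v t (ii t) < v t (jj t)" if "t + 1 < s" for t
  proof -
    have c: "ii t \<le> k" "k < jj t" "v (t+1) = v t \<circ> transpose (ii t) (jj t)"
      "inv_len (v (t+1)) = inv_len (v t) + 1"
      using cov[OF that] unfolding kcover_def by auto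
    have "\<not> v t (jj t) \<le> v t (ii t)"
      using swap_not_cover[of "ii t" "jj t" "v t"] c by force
    thus ?thesis using c by simp
  qed
  obtain p where p: "p \<in> {k<..n}" "u p = i" using assms(5) by blast
  have wp: "w p \<noteq> u p" using assms(6) p unfolding fixI_def by force
  have B: "t < s \<longrightarrow> (\<forall>t'<t. jj t' \<noteq> p) \<longrightarrow> v t p = u p" for t
  proof (induction t)
    case 0 show ?case using v0 by simp
  next
    case (Suc t)
    show ?case
    proof (intro impI)
      assume a1: "Suc t < s" and a2: "\<forall>t'<Suc t. jj t' \<noteq> p"
      have st: "ii t \<le> k \<and> k < jj t \<and> v (t+1) = v t \<circ> transpose (ii t) (jj t)"
        using stepF[of t] a1 by simp
      have "v (Suc t) p = v t p" using st a2 p(1) by (auto simp add: transpose_def)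
      thus "v (Suc t) p = u p" using Suc a1 a2 by simp
    qed
  qed
  have C: "v t q \<le> v t' q" if "q \<le> k" "t \<le> t'" "t' < s" for q t t'
    using that(2,3)
  proof (induction t' rule: dec_induct)
    case base show ?case by simp
  next
    case (step m)
    have st: "ii m \<le> k \<and> k < jj m \<and> v (m+1) = v m \<circ> transpose (ii m) (jj m)
      \<and> v m (ii m) < v m (jj m)" using step.hyps step.prems by (intro stepF) simp
    have "v m q \<le> v (Suc m) q" using st that(1) by (auto simp: transpose_def)
    thus ?case using step by simp
  qed
  have "\<exists>t. t + 1 < s \<and> jj t = p"
  proof (rule ccontr)
    assume "\<not> ?thesis"
    hence "v (s-1) p = u p" using B[of "s-1"] s1 by auto
    thus False using wp vs by simp
  qed
  then obtain t1 where t1: "t1 + 1 < s" "jj t1 = p" by blast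
  define t0 where "t0 = (LEAST t. jj t = p)"
  have t0a: "jj t0 = p" "t0 \<le> t1" using t1(2) unfolding t0_def
    by (auto intro: LeastI Least_le)
  have t0b: "\<forall>t'<t0. jj t' \<noteq> p" unfolding t0_def using not_less_Least by blast
  have t0: "t0 + 1 < s" "jj t0 = p" "\<forall>t'<t0. jj t' \<noteq> p"
    using t0a t0b t1 by auto
  define q where "q = ii t0"
  have st: "ii t0 \<le> k \<and> k < jj t0 \<and> v (t0+1) = v t0 \<circ> transpose (ii t0) (jj t0)
      \<and> v t0 (ii t0) < v t0 (jj t0)" using stepF t0(1) by blast
  have vt0p: "v t0 p = i" using B[of t0] t0 p by auto
  have qk: "q \<le> k" using st q_def by simp
  have v1q: "v (t0+1) q = i" using st vt0p t0(2) q_def by simp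
  have vt0q: "v t0 q < i" using st vt0p t0(2) q_def by simp
  have wq: "i \<le> w q" using C[OF qk, of "t0+1" "s-1"] t0 vs v1q by simp
  show ?thesis
  proof (cases "a \<le> q")
    case True thus ?thesis using qk wq by auto
  next
    case False
    have "u q = q" "w q = q" using assms(2,3) False unfolding S_int_def by auto
    moreover have "u q \<le> v t0 q" using C[OF qk, of 0 t0] t0 v0 by simp
    ultimately show ?thesis using vt0q wq by simp
  qed
qed

end
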